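(* Let $R\subset S$ be an FCP ring extension and let $\mathcal E$ be the set of essential elements of $[R,S]$. Then $\mathcal S[R,S]=\bigcap_{E\in\mathcal E}E$, and $\mathcal S[R,S]$ is the least element of $\mathcal E$.
   Context: All rings are commutative with identity. $[R,S]$ is the lattice of $R$-subalgebras of $S$ (meet = intersection, join = product). FCP: every chain in $[R,S]$ is finite. $T\subset U$ minimal means $[T,U]=\{T,U\}$; an atom of $[R,S]$ is $T$ with $R\subset T$ minimal; the socle $\mathcal S[R,S]$ is the product of all atoms of $[R,S]$. An element $T\in[R,S]$ is essential if $T\neq R$ and $U\cap T\neq R$ for every $U\in[R,S]$ with $U\neq R$. *)

theory Defs
  imports Main
begin

(* The ambient ring S is the whole type 'a :: comm_ring_1; R is a subring of S.
   R-subalgebras of S are exactly the subrings of S containing R. *)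

definition is_subring :: "'a::comm_ring_1 set \<Rightarrow> bool" where
  "is_subring A \<longleftrightarrow> 1 \<in> A \<and> (\<forall>x\<in>A. \<forall>y\<in>A. x + y \<in> A \<and> x * y \<in> A) \<and> (\<forall>x\<in>A. - x \<in> A)"

definition interval :: "'a::comm_ring_1 set \<Rightarrow> 'a set set" where
  "interval R = {T. is_subring T \<and> R \<subseteq> T}"

definition FCP :: "'a::comm_ring_1 set \<Rightarrow> bool" where
  "FCP R \<longleftrightarrow> (\<forall>C. C \<subseteq> interval R \<and> Complete_Partial_Order.chain (\<subseteq>) C \<longrightarrow> finite C)"

definition minimal_ext :: "'a::comm_ring_1 set \<Rightarrow> 'a set \<Rightarrow> bool" where
  "minimal_ext T U \<longleftrightarrow> T \<subset> U \<and> {V \<in> interval T. V \<subseteq> U} = {T, U}"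

definition atom :: "'a::comm_ring_1 set \<Rightarrow> 'a set \<Rightarrow> bool" where
  "atom R T \<longleftrightarrow> T \<in> interval R \<and> minimal_ext R T"

(* subring generated by a set: the product (join) in [R,S] *)
definition ring_gen :: "'a::comm_ring_1 set \<Rightarrow> 'a set" where
  "ring_gen A = \<Inter>{T. is_subring T \<and> A \<subseteq> T}"

(* socle: product of all atoms of [R,S] (taken in [R,S], so it contains R) *)
definition socle :: "'a::comm_ring_1 set \<Rightarrow> 'a set" where
  "socle R = ring_gen (R \<union> \<Union>{T. atom R T})"

definition essential :: "'a::comm_ring_1 set \<Rightarrow> 'a set \<Rightarrow> bool" where
  "essential R T \<longleftrightarrow> T \<in> interval R \<and> T \<noteq> R \<and>
     (\<forall>U\<in>interval R. U \<noteq> R \<longrightarrow> U \<inter> T \<noteq> R)"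

end

theory Submission
  imports Defs
begin

lemma subring_Inter: "is_subring (ring_gen A)"
  unfolding ring_gen_def is_subring_def by blast

lemma ring_gen_sub: "A \<subseteq> ring_gen A"
  unfolding ring_gen_def by blast

lemma ring_gen_least: "is_subring T \<Longrightarrow> A \<subseteq> T \<Longrightarrow> ring_gen A \<subseteq> T"
  unfolding ring_gen_def by blast

lemma subring_UNIV: "is_subring (UNIV::'a::comm_ring_1 set)"
  unfolding is_subring_def by blast

lemma subring_inter: "is_subring A \<Longrightarrow> is_subring B \<Longrightarrow> is_subring (A \<inter> B)"
  unfolding is_subring_def by blast

lemma exists_atom:
  fixes R :: "'a::comm_ring_1 set"
  assumes R: "is_subring R" and F: "FCP R" and U: "U \<in> interval R" "U \<noteq> R"
  shows "\<exists>A. atom R A \<and> A \<subseteq> U"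
proof -
  define X where "X = {V \<in> interval R. R \<subset> V \<and> V \<subseteq> U}"
  have UX: "U \<in> X" using U unfolding X_def interval_def by auto
  have "\<exists>V\<in>X. \<forall>W\<in>X. \<not> W \<subset> V"
  proof (rule ccontr)
    assume "\<not> ?thesis"
    then have st: "\<forall>V\<in>X. \<exists>W. W \<in> X \<and> W \<subset> V" by blast
    define f where "f = rec_nat U (\<lambda>_ V. SOME W. W \<in> X \<and> W \<subset> V)"
    have f0: "f 0 = U" and fS: "\<And>n. f (Suc n) = (SOME W. W \<in> X \<and> W \<subset> f n)"
      unfolding f_def by simp_all
    have fX: "f n \<in> X \<and> f (Suc n) \<in> X \<and> f (Suc n) \<subset> f n" for n
    proof (induction n)
      case 0
      then show ?case using someI_ex[OF st[rule_format, OF UX]] UX f0 fS by metis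
    next
      case (Suc n)
      then show ?case using someI_ex[OF st[rule_format, of "f (Suc n)"]] fS by metis
    qed
    have dec: "m < n \<Longrightarrow> f n \<subset> f m" for m n
    proof (induction n)
      case 0 then show ?case by simp
    next
      case (Suc n)
      then show ?case using fX[of n] by (metis less_Suc_eq psubset_trans)
    qed
    have le: "m \<le> n \<Longrightarrow> f n \<subseteq> f m" for m n
      using dec[of m n] by (cases "m = n") auto
    have "inj f"
      by (rule injI) (metis dec less_irrefl nat_neq_iff)
    then have "infinite (range f)" using finite_imageD by blast
    moreover have "range f \<subseteq> interval R" using fX unfolding X_def by blast
    moreover have "Complete_Partial_Order.chain (\<subseteq>) (range f)"
      unfolding chain_def using le by (metis image_iff nat_le_linear)
    ultimately show False using F unfolding FCP_def by blast
  qed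
  then obtain V where V: "V \<in> X" "\<forall>W\<in>X. \<not> W \<subset> V" by blast
  have "minimal_ext R V"
    unfolding minimal_ext_def
  proof
    show "R \<subset> V" using V unfolding X_def by blast
    show "{W \<in> interval R. W \<subseteq> V} = {R, V}"
    proof
      show "{W \<in> interval R. W \<subseteq> V} \<subseteq> {R, V}"
      proof
        fix W assume W: "W \<in> {W \<in> interval R. W \<subseteq> V}"
        show "W \<in> {R, V}"
        proof (cases "W = R")
          case False
          then have "W \<in> X" using W V(1) unfolding X_def interval_def by auto
          then show ?thesis using V(2) W by blast
        qed simp
      qed
      show "{R, V} \<subseteq> {W \<in> interval R. W \<subseteq> V}"
        using R V(1) unfolding X_def interval_def by auto
    qed
  qed
  then show ?thesis using V(1) unfolding atom_def X_def by blast
qed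

lemma atom_props:
  assumes "atom R A"
  shows "A \<in> interval R" "A \<noteq> R" "R \<subseteq> A" "{V \<in> interval R. V \<subseteq> A} = {R, A}"
proof -
  have a: "A \<in> interval R" "R \<subset> A" "{V \<in> interval R. V \<subseteq> A} = {R, A}"
    using assms unfolding atom_def minimal_ext_def by simp_all
  then show "A \<in> interval R" "A \<noteq> R" "R \<subseteq> A" "{V \<in> interval R. V \<subseteq> A} = {R, A}"
    by auto
qed

lemma essential_iff:
  fixes R :: "'a::comm_ring_1 set"
  assumes R: "is_subring R" and F: "FCP R"
  shows "essential R T \<longleftrightarrow> T \<in> interval R \<and> T \<noteq> R \<and> (\<forall>A. atom R A \<longrightarrow> A \<subseteq> T)"
proof
  assume E: "essential R T"
  have Ti: "T \<in> interval R" "T \<noteq> R" and Eq: "\<forall>U\<in>interval R. U \<noteq> R \<longrightarrow> U \<inter> T \<noteq> R"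
    using E unfolding essential_def by simp_all
  have "A \<subseteq> T" if A: "atom R A" for A
  proof -
    note Ai = atom_props[OF A]
    have ne: "A \<inter> T \<noteq> R" using Eq Ai(1,2) by blast
    have "is_subring (A \<inter> T)" using Ai(1) Ti(1) subring_inter[of A T]
      unfolding interval_def by simp
    moreover have "R \<subseteq> A \<inter> T" using Ai(1) Ti(1) unfolding interval_def by simp
    ultimately have "A \<inter> T \<in> interval R" unfolding interval_def by simp
    then have "A \<inter> T \<in> {V \<in> interval R. V \<subseteq> A}" by simp
    then have "A \<inter> T \<in> {R, A}" using Ai(4) by simp
    then have "A \<inter> T = A" using ne by simp
    then show ?thesis by blast
  qed
  then show "T \<in> interval R \<and> T \<noteq> R \<and> (\<forall>A. atom R A \<longrightarrow> A \<subseteq> T)"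
    using Ti by blast
next
  assume H: "T \<in> interval R \<and> T \<noteq> R \<and> (\<forall>A. atom R A \<longrightarrow> A \<subseteq> T)"
  have "U \<inter> T \<noteq> R" if UU: "U \<in> interval R" "U \<noteq> R" for U
  proof -
    obtain A where A: "atom R A" "A \<subseteq> U" using exists_atom[OF R F UU(1) UU(2)] by blast
    then have "A \<subseteq> U \<inter> T" using H by blast
    moreover have "A \<noteq> R" "R \<subseteq> A" using atom_props[OF A(1)] by simp_all
    ultimately show ?thesis by blast
  qed
  then show "essential R T" using H unfolding essential_def by blast
qed

theorem proposition8p111:
  fixes R :: "'a::comm_ring_1 set"
  assumes "is_subring R" and "R \<noteq> UNIV" and "FCP R"
  shows "socle R = \<Inter>{E. essential R E}
    \<and> essential R (socle R) \<and> (\<forall>E. essential R E \<longrightarrow> socle R \<subseteq> E)"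
proof -
  note ess = essential_iff[OF assms(1) assms(3)]
  have sub: "R \<union> \<Union>{T. atom R T} \<subseteq> socle R"
    unfolding socle_def by (rule ring_gen_sub)
  have si: "socle R \<in> interval R"
    using sub subring_Inter unfolding interval_def socle_def by auto
  have "UNIV \<in> interval R" using subring_UNIV unfolding interval_def by auto
  then obtain A where A: "atom R A" using exists_atom[OF assms(1) assms(3)] assms(2) by blast
  then have "A \<noteq> R" "R \<subseteq> A" using atom_props[OF A] by simp_all
  moreover have "A \<subseteq> socle R" using sub A by blast
  ultimately have "socle R \<noteq> R" by blast
  then have es: "essential R (socle R)" using ess si sub by blast
  have least: "\<forall>E. essential R E \<longrightarrow> socle R \<subseteq> E"
  proof (intro allI impI)
    fix E assume "essential R E"
    then have "E \<in> interval R" "\<forall>A. atom R A \<longrightarrow> A \<subseteq> E" using ess by auto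
    then show "socle R \<subseteq> E" unfolding socle_def interval_def
      by (intro ring_gen_least) auto
  qed
  have "socle R = \<Inter>{E. essential R E}" using es least by blast
  then show ?thesis using es least by blast
qed

end
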